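(* Let $V$ be a finite-dimensional $S_{n+1}$-invariant subspace of the space of $k$-forms on $T^n$, and let $W_d$ ($0\le d\le n$) be $S_{n+1}$-invariant subspaces with $V_d=W_d\oplus V_{d+1}$. Then the geometric decomposition map $\mathcal D:V\to\bigoplus_{d=0}^n\bigoplus_{\dim F=d}\mathring V(F)$ is $S_{n+1}$-equivariant.
   Context: $T^n\subset\mathbb R^{n+1}$ is the standard simplex $\{\lambda_i\ge0,\ \sum\lambda_i=1\}$. For $\pi\in S_{n+1}$ (permutations of $\{0,\dots,n\}$), $S_\pi(\lambda_0,\dots,\lambda_n)=(\lambda_{\pi(0)},\dots,\lambda_{\pi(n)})$, and $\pi$ acts on forms by pullback $S_\pi^*$. For a face $F$, $V(F)=\mathrm{tr}_{T^n,F}(V)$ (pullback to $F$), and $\mathring V(F)$ is the subspace of $V(F)$ with vanishing trace on $\partial F$. $V_d$ is the subspace of $V$ of forms whose traces vanish on all $(d-1)$-dimensional faces of $T^n$ ($V_0=V$, $V_{n+1}=0$). $\mathcal D$ is defined on $W_d$ by $\alpha\mapsto\bigoplus_{\dim F=d}\mathrm{tr}_{T^n,F}\alpha$ and extended linearly. The action of $S_{n+1}$ on $\bigoplus_{\dim F=d}\mathring V(F)$: if $F'=S_\pi(F)$, then pullback by $S_\pi|_F:F\to F'$ gives a map $S_\pi^*:\mathring V(F')\to\mathring V(F)$, and these maps together define the action of $\pi$ on the direct sum. *)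

theory Defs
  imports "HOL-Analysis.Analysis" "HOL-Combinatorics.Permutations"
begin

text \<open>Points of R^(n+1) are functions nat => real vanishing beyond n.
 A k-form on T^n is represented (in ambient coordinates) by a function
 w :: point => point list => real, where w x vs is the value at x of the form
 applied to the k tangent vectors vs; it is normalized to be 0 unless x is in T^n,
 vs has length k and all vs are tangent to T^n.\<close>

type_synonym pt = "nat \<Rightarrow> real"
type_synonym form = "pt \<Rightarrow> pt list \<Rightarrow> real"

definition std_simplex :: "nat \<Rightarrow> pt set" where
  "std_simplex n = {x. (\<forall>i\<le>n. 0 \<le> x i) \<and> (\<forall>i>n. x i = 0) \<and> (\<Sum>i\<le>n. x i) = 1}"

text \<open>Faces of T^n are indexed by their nonempty vertex sets s; dim = card s - 1.\<close>
definition is_face :: "nat \<Rightarrow> nat set \<Rightarrow> bool" where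
  "is_face n s \<longleftrightarrow> s \<subseteq> {0..n} \<and> s \<noteq> {}"

definition face :: "nat \<Rightarrow> nat set \<Rightarrow> pt set" where
  "face n s = {x \<in> std_simplex n. \<forall>i. i \<notin> s \<longrightarrow> x i = 0}"

definition tangent :: "nat set \<Rightarrow> pt set" where
  "tangent s = {v. (\<forall>i. i \<notin> s \<longrightarrow> v i = 0) \<and> (\<Sum>i\<in>s. v i) = 0}"

definition multilinear_alt :: "pt set \<Rightarrow> nat \<Rightarrow> (pt list \<Rightarrow> real) \<Rightarrow> bool" where
  "multilinear_alt U k f \<longleftrightarrow>
     (\<forall>vs j u w a b. length vs = k \<longrightarrow> set vs \<subseteq> U \<longrightarrow> j < k \<longrightarrow> u \<in> U \<longrightarrow> w \<in> U \<longrightarrow>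
        f (vs[j := (\<lambda>i. a * u i + b * w i)]) = a * f (vs[j := u]) + b * f (vs[j := w])) \<and>
     (\<forall>vs i j. length vs = k \<longrightarrow> set vs \<subseteq> U \<longrightarrow> i < k \<longrightarrow> j < k \<longrightarrow> i \<noteq> j \<longrightarrow>
        vs ! i = vs ! j \<longrightarrow> f vs = 0)"

text \<open>(Not necessarily smooth) k-forms on the face s of T^n, in normalized ambient representation.\<close>
definition forms_on :: "nat \<Rightarrow> nat set \<Rightarrow> nat \<Rightarrow> form set" where
  "forms_on n s k = {w. (\<forall>x vs. \<not> (x \<in> face n s \<and> length vs = k \<and> set vs \<subseteq> tangent s) \<longrightarrow> w x vs = 0)
      \<and> (\<forall>x \<in> face n s. multilinear_alt (tangent s) k (w x))}"

definition kforms :: "nat \<Rightarrow> nat \<Rightarrow> form set" where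
  "kforms n k = forms_on n {0..n} k"

definition trace :: "nat \<Rightarrow> nat set \<Rightarrow> form \<Rightarrow> form" where
  "trace n s w = (\<lambda>x vs. if x \<in> face n s \<and> set vs \<subseteq> tangent s then w x vs else 0)"

text \<open>S_pi(x) = (x_{pi 0}, ..., x_{pi n}) = x o pi; it is linear, so the pullback is\<close>
definition pull :: "(nat \<Rightarrow> nat) \<Rightarrow> form \<Rightarrow> form" where
  "pull p w = (\<lambda>x vs. w (x \<circ> p) (map (\<lambda>v. v \<circ> p) vs))"

definition fadd :: "form \<Rightarrow> form \<Rightarrow> form" where
  "fadd a b = (\<lambda>x vs. a x vs + b x vs)"
definition fscale :: "real \<Rightarrow> form \<Rightarrow> form" where
  "fscale c a = (\<lambda>x vs. c * a x vs)"
definition fzero :: form where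
  "fzero = (\<lambda>x vs. 0)"

definition fsubspace :: "form set \<Rightarrow> bool" where
  "fsubspace V \<longleftrightarrow> fzero \<in> V \<and> (\<forall>a\<in>V. \<forall>b\<in>V. fadd a b \<in> V) \<and> (\<forall>c. \<forall>a\<in>V. fscale c a \<in> V)"

definition fin_dim :: "form set \<Rightarrow> bool" where
  "fin_dim V \<longleftrightarrow> (\<exists>B. finite B \<and> B \<subseteq> V \<and>
      (\<forall>a\<in>V. \<exists>c. a = (\<lambda>x vs. \<Sum>b\<in>B. c b * b x vs)))"

definition sym_invariant :: "nat \<Rightarrow> form set \<Rightarrow> bool" where
  "sym_invariant n V \<longleftrightarrow> (\<forall>p. p permutes {0..n} \<longrightarrow> (\<forall>a\<in>V. pull p a \<in> V))"

text \<open>V_d: forms in V whose traces vanish on all (d-1)-dimensional faces\<close>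
definition Vsub :: "nat \<Rightarrow> form set \<Rightarrow> nat \<Rightarrow> form set" where
  "Vsub n V d = {a \<in> V. \<forall>s. is_face n s \<and> card s = d \<longrightarrow> trace n s a = fzero}"

definition direct_sum_eq :: "form set \<Rightarrow> form set \<Rightarrow> form set \<Rightarrow> bool" where
  "direct_sum_eq A B C \<longleftrightarrow> B \<subseteq> A \<and> C \<subseteq> A \<and> B \<inter> C = {fzero} \<and>
      (\<forall>a\<in>A. \<exists>b\<in>B. \<exists>c\<in>C. a = fadd b c)"

definition components :: "nat \<Rightarrow> (nat \<Rightarrow> form set) \<Rightarrow> form \<Rightarrow> nat \<Rightarrow> form" where
  "components n W a = (THE c. (\<forall>d\<le>n. c d \<in> W d) \<and> (\<forall>d>n. c d = fzero) \<and>
       a = (\<lambda>x vs. \<Sum>d\<le>n. c d x vs))"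

definition geom_decomp :: "nat \<Rightarrow> (nat \<Rightarrow> form set) \<Rightarrow> form \<Rightarrow> nat set \<Rightarrow> form" where
  "geom_decomp n W a s = trace n s (components n W a (card s - 1))"

text \<open>action of pi on the direct sum over faces: (pi . b)_F = S_pi^* b_{S_pi F},
  S_pi(face s) = face (inv pi ` s)\<close>
definition face_action :: "(nat \<Rightarrow> nat) \<Rightarrow> (nat set \<Rightarrow> form) \<Rightarrow> nat set \<Rightarrow> form" where
  "face_action p b s = pull p (b (inv p ` s))"

end

theory Submission
  imports Defs
begin

definition decomp :: "nat \<Rightarrow> (nat \<Rightarrow> form set) \<Rightarrow> form \<Rightarrow> (nat \<Rightarrow> form) \<Rightarrow> bool" where
  "decomp n W a c \<longleftrightarrow> (\<forall>d\<le>n. c d \<in> W d) \<and> (\<forall>d>n. c d = fzero) \<and>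
       a = (\<lambda>x vs. \<Sum>d\<le>n. c d x vs)"

lemma sub_sum:
  assumes "fsubspace U" "finite D" "\<forall>d\<in>D. f d \<in> U"
  shows "(\<lambda>x vs. \<Sum>d\<in>D. f d x vs) \<in> U"
  using assms(2,3)
proof (induction D rule: finite_induct)
  case empty
  then show ?case using assms(1) by (simp add: fsubspace_def fzero_def)
next
  case (insert d D)
  have "(\<lambda>x vs. \<Sum>e\<in>insert d D. f e x vs) = fadd (f d) (\<lambda>x vs. \<Sum>e\<in>D. f e x vs)"
    using insert by (simp add: fadd_def)
  then show ?case using insert assms(1) by (simp add: fsubspace_def)
qed

lemma sub_diff:
  assumes "fsubspace U" "a \<in> U" "b \<in> U"
  shows "(\<lambda>x vs. a x vs - b x vs) \<in> U"
proof -
  have "(\<lambda>x vs. a x vs - b x vs) = fadd a (fscale (-1) b)"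
    by (simp add: fadd_def fscale_def)
  then show ?thesis using assms by (simp add: fsubspace_def)
qed

lemma Vsub_sub:
  assumes "fsubspace V" shows "fsubspace (Vsub n V d)"
  using assms unfolding fsubspace_def Vsub_def
  by (auto simp: trace_def fadd_def fscale_def fzero_def fun_eq_iff)

lemma Vsub_0: "Vsub n V 0 = V"
  unfolding Vsub_def is_face_def
  by (auto dest: finite_subset[OF _ finite_atLeastAtMost])

lemma trace_full: "a \<in> kforms n k \<Longrightarrow> trace n {0..n} a = a"
  unfolding kforms_def forms_on_def trace_def
  by (auto simp: fun_eq_iff)

lemma Vsub_top:
  assumes "V \<subseteq> kforms n k" "fsubspace V"
  shows "Vsub n V (Suc n) = {fzero}"
proof -
  have "is_face n {0..n}" by (simp add: is_face_def)
  moreover have "card {0..n} = Suc n" by simp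
  ultimately have "a \<in> Vsub n V (Suc n) \<Longrightarrow> a = fzero" for a
    using assms(1) trace_full[of a n k] unfolding Vsub_def by auto
  moreover have "fzero \<in> Vsub n V (Suc n)"
    using Vsub_sub[OF assms(2)] by (simp add: fsubspace_def)
  ultimately show ?thesis by auto
qed


locale setting =
  fixes n :: nat and V :: "form set" and W :: "nat \<Rightarrow> form set"
  assumes subV: "fsubspace V"
    and subW: "\<And>d. d \<le> n \<Longrightarrow> fsubspace (W d)"
    and ds: "\<And>d. d \<le> n \<Longrightarrow> direct_sum_eq (Vsub n V d) (W d) (Vsub n V (Suc d))"
begin

lemma mono: "d \<le> e \<Longrightarrow> e \<le> Suc n \<Longrightarrow> Vsub n V e \<subseteq> Vsub n V d"
proof (induction e rule: dec_induct)
  case base then show ?case by simp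
next
  case (step e)
  then have "Vsub n V (Suc e) \<subseteq> Vsub n V e" using ds[of e] by (simp add: direct_sum_eq_def)
  then show ?case using step by auto
qed

lemma WV: "d \<le> n \<Longrightarrow> W d \<subseteq> Vsub n V d"
  using ds by (simp add: direct_sum_eq_def)

lemma uniq:
  assumes c: "decomp n W a c" and c': "decomp n W a c'"
  shows "c = c'"
proof -
  have "\<forall>d<j. c d = c' d" if "j \<le> Suc n" for j
    using that
  proof (induction j)
    case 0 then show ?case by simp
  next
    case (Suc j)
    then have jn: "j \<le> n" and IH: "\<forall>d<j. c d = c' d" by auto
    define e where "e = (\<lambda>x vs. c j x vs - c' j x vs)"
    have eW: "e \<in> W j" unfolding e_def
      using sub_diff[OF subW[OF jn]] c c' jn by (simp add: decomp_def)
    have "e = (\<lambda>x vs. \<Sum>d\<in>{Suc j..n}. c' d x vs - c d x vs)"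
    proof (intro ext)
      fix x vs
      have "(\<Sum>d\<le>n. c d x vs) = (\<Sum>d\<le>n. c' d x vs)"
        using c c' unfolding decomp_def by metis
      then have 0: "(\<Sum>d\<le>n. c d x vs - c' d x vs) = 0" by (simp add: sum_subtractf)
      have "(\<Sum>d\<le>n. c d x vs - c' d x vs) = (\<Sum>d\<in>{j..n}. c d x vs - c' d x vs)"
        by (rule sum.mono_neutral_right) (use IH in auto)
      also have "\<dots> = e x vs + (\<Sum>d\<in>{Suc j..n}. c d x vs - c' d x vs)"
        using jn by (simp add: sum.atLeast_Suc_atMost e_def)
      finally have "e x vs = - (\<Sum>d\<in>{Suc j..n}. c d x vs - c' d x vs)" using 0 by simp
      also have "\<dots> = (\<Sum>d\<in>{Suc j..n}. c' d x vs - c d x vs)"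
        by (simp add: sum_negf[symmetric])
      finally show "e x vs = (\<Sum>d\<in>{Suc j..n}. c' d x vs - c d x vs)" .
    qed
    moreover have "(\<lambda>x vs. \<Sum>d\<in>{Suc j..n}. c' d x vs - c d x vs) \<in> Vsub n V (Suc j)"
    proof (rule sub_sum[OF Vsub_sub[OF subV]], simp, intro ballI)
      fix d assume d: "d \<in> {Suc j..n}"
      then have "(\<lambda>x vs. c' d x vs - c d x vs) \<in> W d"
        using sub_diff[OF subW] c c' by (simp add: decomp_def)
      then show "(\<lambda>x vs. c' d x vs - c d x vs) \<in> Vsub n V (Suc j)"
        using WV[of d] mono[of "Suc j" d] d by auto
    qed
    ultimately have "e \<in> W j \<inter> Vsub n V (Suc j)" using eW by simp
    then have "e = fzero" using ds[OF jn] by (auto simp: direct_sum_eq_def)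
    then have "c j = c' j" unfolding e_def fzero_def by (auto simp: fun_eq_iff)
    then show ?case using IH less_Suc_eq by auto
  qed
  from this[of "Suc n"] c c' show ?thesis
    unfolding decomp_def by (metis le_refl less_Suc_eq_le not_le ext)
qed


lemma exist:
  assumes kf: "V \<subseteq> kforms n k" and a: "a \<in> V"
  shows "\<exists>c. decomp n W a c"
proof -
  have "\<forall>a\<in>Vsub n V (Suc n - i). \<exists>c. (\<forall>d\<le>n. c d \<in> W d) \<and>
          (\<forall>d. d < Suc n - i \<or> d > n \<longrightarrow> c d = fzero) \<and> a = (\<lambda>x vs. \<Sum>d\<le>n. c d x vs)"
    if "i \<le> Suc n" for i
    using that
  proof (induction i)
    case 0
    show ?case
    proof
      fix a assume "a \<in> Vsub n V (Suc n - 0)"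
      then have "a = fzero" using Vsub_top[OF kf subV] by simp
      then show "\<exists>c. (\<forall>d\<le>n. c d \<in> W d) \<and>
          (\<forall>d. d < Suc n - 0 \<or> d > n \<longrightarrow> c d = fzero) \<and> a = (\<lambda>x vs. \<Sum>d\<le>n. c d x vs)"
        by (intro exI[of _ "\<lambda>_. fzero"]) (use subW in \<open>auto simp: fsubspace_def fzero_def\<close>)
    qed
  next
    case (Suc i)
    define j where "j = n - i"
    have jn: "j \<le> n" and j1: "Suc n - Suc i = j" and j2: "Suc n - i = Suc j"
      using Suc.prems by (auto simp: j_def)
    show ?case
    proof
      fix a assume "a \<in> Vsub n V (Suc n - Suc i)"
      then have "a \<in> Vsub n V j" using j1 by simp
      then obtain b r where b: "b \<in> W j" and r: "r \<in> Vsub n V (Suc j)" and ab: "a = fadd b r"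
        using ds[OF jn] unfolding direct_sum_eq_def by blast
      obtain c where c1: "\<forall>d\<le>n. c d \<in> W d" and c2: "\<forall>d. d < Suc j \<or> d > n \<longrightarrow> c d = fzero"
        and c3: "r = (\<lambda>x vs. \<Sum>d\<le>n. c d x vs)"
        using Suc.IH Suc.prems r j2 by auto
      define c' where "c' = c(j := b)"
      have "a = (\<lambda>x vs. \<Sum>d\<le>n. c' d x vs)"
      proof (intro ext)
        fix x vs
        have "(\<Sum>d\<le>n. c' d x vs) = (\<Sum>d\<le>n. c d x vs + (if d = j then b x vs else 0))"
          by (rule sum.cong) (use c2 in \<open>auto simp: c'_def fzero_def\<close>)
        also have "\<dots> = r x vs + b x vs" using jn by (simp add: sum.distrib c3)
        finally show "a x vs = (\<Sum>d\<le>n. c' d x vs)" by (simp add: ab fadd_def)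
      qed
      moreover have "\<forall>d\<le>n. c' d \<in> W d" using c1 b by (simp add: c'_def)
      moreover have "\<forall>d. d < j \<or> d > n \<longrightarrow> c' d = fzero" using c2 jn by (auto simp: c'_def)
      ultimately show "\<exists>c. (\<forall>d\<le>n. c d \<in> W d) \<and>
          (\<forall>d. d < Suc n - Suc i \<or> d > n \<longrightarrow> c d = fzero) \<and> a = (\<lambda>x vs. \<Sum>d\<le>n. c d x vs)"
        using j1 by metis
    qed
  qed
  from this[of "Suc n"] a show ?thesis
    unfolding decomp_def by (simp add: Vsub_0)
qed

lemma components_decomp:
  assumes "V \<subseteq> kforms n k" "a \<in> V"
  shows "decomp n W a (components n W a)"
proof -
  obtain c where c: "decomp n W a c" using exist[OF assms] by blast
  have "components n W a = c" unfolding components_def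
    by (rule the_equality) (use c uniq in \<open>auto simp: decomp_def\<close>)
  then show ?thesis using c by simp
qed

end

lemma perm_simplex:
  assumes p: "p permutes {0..n}"
  shows "x \<circ> p \<in> std_simplex n \<longleftrightarrow> x \<in> std_simplex n"
proof -
  have out: "i > n \<Longrightarrow> p i = i" for i using p by (auto simp: permutes_def)
  have bij: "bij_betw p {..n} {..n}"
    using permutes_imp_bij[OF p] by (simp add: atLeast0AtMost)
  have sum: "(\<Sum>i\<le>n. x (p i)) = (\<Sum>i\<le>n. x i)"
    using sum.reindex_bij_betw[OF bij, of x] by simp
  have a: "(\<forall>i\<le>n. 0 \<le> x (p i)) \<longleftrightarrow> (\<forall>i\<le>n. 0 \<le> x i)"
    using bij by (metis bij_betw_iff_bijections atMost_iff)
  show ?thesis unfolding std_simplex_def using sum a out by auto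
qed

lemma pull_trace:
  assumes p: "p permutes {0..n}"
  shows "trace n s (pull p c) = pull p (trace n (inv p ` s) c)"
proof -
  have bij: "bij p" using permutes_bij[OF p] .
  have mem: "i \<in> inv p ` s \<longleftrightarrow> p i \<in> s" for i
  proof
    assume "i \<in> inv p ` s"
    then obtain j where "j \<in> s" "i = inv p j" by blast
    then show "p i \<in> s" using bij by (simp add: bij_inv_eq_iff)
  next
    assume "p i \<in> s"
    moreover have "i = inv p (p i)" using bij by (simp add: bij_is_inj)
    ultimately show "i \<in> inv p ` s" by blast
  qed
  have zero: "(\<forall>i. i \<notin> inv p ` s \<longrightarrow> v (p i) = 0) \<longleftrightarrow> (\<forall>j. j \<notin> s \<longrightarrow> v j = 0)" for v :: pt
    using mem bij by (metis bij_pointE)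
  have sumeq: "(\<Sum>i\<in>inv p ` s. v (p i)) = (\<Sum>j\<in>s. v j)" for v :: pt
  proof -
    have "inj (inv p)" using bij_imp_bij_inv[OF bij] bij_is_inj by blast
    then have "inj_on (inv p) s" using inj_on_subset by blast
    then have "(\<Sum>i\<in>inv p ` s. v (p i)) = (\<Sum>j\<in>s. v (p (inv p j)))"
      by (simp add: sum.reindex)
    also have "\<dots> = (\<Sum>j\<in>s. v j)" using bij by (simp add: bij_is_surj surj_f_inv_f)
    finally show ?thesis .
  qed
  have face: "x \<circ> p \<in> face n (inv p ` s) \<longleftrightarrow> x \<in> face n s" for x
    unfolding face_def using perm_simplex[OF p, of x] zero[of x] by auto
  have tan: "v \<circ> p \<in> tangent (inv p ` s) \<longleftrightarrow> v \<in> tangent s" for v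
    unfolding tangent_def using zero[of v] sumeq[of v] by auto
  show ?thesis unfolding trace_def pull_def
    using face tan by (auto simp: fun_eq_iff)
qed

context setting begin

lemma comp_equiv:
  assumes kf: "V \<subseteq> kforms n k" and inv: "\<And>d. d \<le> n \<Longrightarrow> sym_invariant n (W d)"
    and symV: "sym_invariant n V"
    and p: "p permutes {0..n}" and a: "a \<in> V"
  shows "components n W (pull p a) d = pull p (components n W a d)"
proof -
  have c: "decomp n W a (components n W a)" using components_decomp[OF kf a] .
  have pa: "pull p a \<in> V" using symV p a by (simp add: sym_invariant_def)
  have "decomp n W (pull p a) (\<lambda>d. pull p (components n W a d))"
    using c inv p unfolding decomp_def
    by (auto simp: sym_invariant_def pull_def fzero_def fun_eq_iff)
  then have "components n W (pull p a) = (\<lambda>d. pull p (components n W a d))"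
    using uniq components_decomp[OF kf pa] by blast
  then show ?thesis by simp
qed

end

theorem proposition3p13:
  fixes n k :: nat and V :: "form set" and W :: "nat \<Rightarrow> form set"
  assumes "V \<subseteq> kforms n k" and "fsubspace V" and "fin_dim V" and "sym_invariant n V"
    and "\<And>d. d \<le> n \<Longrightarrow> fsubspace (W d) \<and> sym_invariant n (W d)"
    and "\<And>d. d \<le> n \<Longrightarrow> direct_sum_eq (Vsub n V d) (W d) (Vsub n V (Suc d))"
  shows "\<forall>p. p permutes {0..n} \<longrightarrow> (\<forall>a\<in>V. \<forall>s. is_face n s \<longrightarrow>
           geom_decomp n W (pull p a) s = face_action p (geom_decomp n W a) s)"
proof (intro allI impI ballI)
  fix p a s assume p: "p permutes {0..n}" and a: "a \<in> V" and s: "is_face n s"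
  interpret setting n V W using assms by unfold_locales auto
  have card: "card (inv p ` s) = card s"
  proof -
    have "inj (inv p)" using bij_imp_bij_inv[OF permutes_bij[OF p]] bij_is_inj by blast
    then have "inj_on (inv p) s" using inj_on_subset by blast
    then show ?thesis using card_image by blast
  qed
  show "geom_decomp n W (pull p a) s = face_action p (geom_decomp n W a) s"
    unfolding geom_decomp_def face_action_def card
    using comp_equiv[OF assms(1) _ assms(4) p a] assms(5) pull_trace[OF p]
    by simp
qed

end
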